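(* Let $m$ and $n$ be positive integers divisible by $4$, and let $t\ge 2$ and $r\ge 1$ be integers. Then (i) $\gamma_{tR}(C_m\times C_n)=\frac{mn}{2}$; (ii) $\gamma_{tR}(C_m\times K_{t,t})=2m$; (iii) $\gamma_{tR}(C_m\times P_{C_{3r}})=2mr$; (iv) $\gamma_{tR}(K_{t,t}\times P_{C_{3r}})=8r$.
   Context: $C_k$ is the cycle on $k$ vertices. The prism $P_{C_{3r}}$ over $C_{3r}$ is the Cartesian product $C_{3r}\,\Box\,K_2$ (two disjoint copies of $C_{3r}$ with a perfect matching joining corresponding vertices). A total Roman dominating function on a graph $X$ without isolated vertices is a map $f:V(X)\to\{0,1,2\}$ such that every vertex with label 0 has a neighbor with label 2 and the subgraph induced by vertices with positive labels has no isolated vertices; $\gamma_{tR}(X)$ is the minimum of $\sum_v f(v)$ over such $f$. The direct product $G\times H$ has vertex set $V(G)\times V(H)$, with $(g,h)(g',h')$ an edge iff $gg'\in E(G)$ and $hh'\in E(H)$. *)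

theory Defs
  imports Main
begin

type_synonym 'a graph = "'a set \<times> ('a \<Rightarrow> 'a \<Rightarrow> bool)"

definition verts :: "'a graph \<Rightarrow> 'a set" where "verts G = fst G"
definition adj :: "'a graph \<Rightarrow> 'a \<Rightarrow> 'a \<Rightarrow> bool" where
  "adj G u v \<longleftrightarrow> u \<in> fst G \<and> v \<in> fst G \<and> snd G u v"

text \<open>Cycle C_k on vertices 0..k-1 (meant for k \<ge> 3).\<close>
definition cycle_graph :: "nat \<Rightarrow> nat graph" where
  "cycle_graph k = ({..<k}, \<lambda>i j. i < k \<and> j < k \<and> (j = (i + 1) mod k \<or> i = (j + 1) mod k))"

definition K2 :: "nat graph" where
  "K2 = ({0, 1}, \<lambda>i j. i \<noteq> j)"

text \<open>Complete bipartite graph K_{t,t}: sides False/True, each with t vertices.\<close>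
definition complete_bipartite :: "nat \<Rightarrow> (bool \<times> nat) graph" where
  "complete_bipartite t = ({x. snd x < t}, \<lambda>x y. fst x \<noteq> fst y)"

definition cartesian_prod :: "'a graph \<Rightarrow> 'b graph \<Rightarrow> ('a \<times> 'b) graph" where
  "cartesian_prod G H = (verts G \<times> verts H,
     \<lambda>(g, h) (g', h'). (g = g' \<and> adj H h h') \<or> (h = h' \<and> adj G g g'))"

definition direct_prod :: "'a graph \<Rightarrow> 'b graph \<Rightarrow> ('a \<times> 'b) graph" where
  "direct_prod G H = (verts G \<times> verts H,
     \<lambda>(g, h) (g', h'). adj G g g' \<and> adj H h h')"

definition prism :: "nat \<Rightarrow> (nat \<times> nat) graph" where
  "prism k = cartesian_prod (cycle_graph k) K2"

definition is_trdf :: "'a graph \<Rightarrow> ('a \<Rightarrow> nat) \<Rightarrow> bool" where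
  "is_trdf G f \<longleftrightarrow>
     (\<forall>v \<in> verts G. f v \<le> 2) \<and>
     (\<forall>v \<in> verts G. f v = 0 \<longrightarrow> (\<exists>u. adj G v u \<and> f u = 2)) \<and>
     (\<forall>v \<in> verts G. f v > 0 \<longrightarrow> (\<exists>u. adj G v u \<and> f u > 0))"

definition gamma_tR :: "'a graph \<Rightarrow> nat" where
  "gamma_tR G = (LEAST w. \<exists>f. is_trdf G f \<and> w = (\<Sum>v \<in> verts G. f v))"

end

theory Submission
  imports Defs
begin

definition symg :: "'a graph \<Rightarrow> bool" where
  "symg G \<longleftrightarrow> (\<forall>u v. adj G u v \<longrightarrow> adj G v u)"

definition degle :: "'a graph \<Rightarrow> nat \<Rightarrow> bool" where
  "degle G k \<longleftrightarrow> (\<forall>v. card {u. adj G v u} \<le> k)"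

definition tdom :: "'a graph \<Rightarrow> 'a set \<Rightarrow> bool" where
  "tdom G A \<longleftrightarrow> A \<subseteq> verts G \<and> (\<forall>g \<in> verts G. \<exists>a \<in> A. adj G g a)"

lemma adj_verts: "adj G u v \<Longrightarrow> u \<in> verts G \<and> v \<in> verts G"
  by (simp add: adj_def verts_def)

lemma nbrs_finite: "finite (verts G) \<Longrightarrow> finite {u. adj G v u}"
  by (rule finite_subset[of _ "verts G"]) (auto dest: adj_verts)

lemma adj_direct: "adj (direct_prod G H) (g, h) (g', h') \<longleftrightarrow> adj G g g' \<and> adj H h h'"
  unfolding adj_def direct_prod_def verts_def by auto

lemma verts_direct: "verts (direct_prod G H) = verts G \<times> verts H"
  unfolding direct_prod_def verts_def by simp

lemma symg_direct: "symg G \<Longrightarrow> symg H \<Longrightarrow> symg (direct_prod G H)"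
  unfolding symg_def by (auto simp: adj_direct)

lemma degle_direct:
  assumes "finite (verts G)" "finite (verts H)" "degle G a" "degle H b"
  shows "degle (direct_prod G H) (a * b)"
  unfolding degle_def
proof
  fix v :: "'a \<times> 'b"
  obtain g h where v: "v = (g, h)" by (cases v)
  have "{u. adj (direct_prod G H) v u} \<subseteq> {x. adj G g x} \<times> {y. adj H h y}"
    using v by (auto simp: adj_direct)
  hence "card {u. adj (direct_prod G H) v u} \<le> card ({x. adj G g x} \<times> {y. adj H h y})"
    by (rule card_mono[rotated]) (simp add: nbrs_finite assms)
  also have "\<dots> = card {x. adj G g x} * card {y. adj H h y}" by (simp add: card_cartesian_product)
  also have "\<dots> \<le> a * b" using assms(3,4) unfolding degle_def by (simp add: mult_le_mono)
  finally show "card {u. adj (direct_prod G H) v u} \<le> a * b" .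
qed

lemma lower:
  assumes fin: "finite (verts G)" and sy: "symg G" and dg: "degle G k" and k2: "2 \<le> k"
    and f: "is_trdf G f"
  shows "2 * card (verts G) \<le> k * sum f (verts G)"
proof -
  define V where "V = verts G"
  define V0 where "V0 = {v \<in> V. f v = 0}"
  define V1 where "V1 = {v \<in> V. f v = 1}"
  define V2 where "V2 = {v \<in> V. f v = 2}"
  have le2: "\<forall>v\<in>V. f v \<le> 2" using f unfolding is_trdf_def V_def by blast
  have finV: "finite V" using fin V_def by simp
  have Veq: "V = V0 \<union> V1 \<union> V2" using le2 unfolding V0_def V1_def V2_def by force
  have fins: "finite V0" "finite V1" "finite V2" using finV unfolding V0_def V1_def V2_def by auto
  have d1: "(V0 \<union> V1) \<inter> V2 = {}" "V0 \<inter> V1 = {}" unfolding V0_def V1_def V2_def by auto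
  have cardV: "card V = card V0 + card V1 + card V2"
    using Veq fins d1 by (simp add: card_Un_disjoint)
  have "sum f V = sum f V0 + sum f V1 + sum f V2"
    using Veq fins d1 by (simp add: sum.union_disjoint)
  moreover have "sum f V0 = 0" unfolding V0_def by simp
  moreover have "sum f V1 = card V1" unfolding V1_def by simp
  moreover have "sum f V2 = 2 * card V2" unfolding V2_def by simp
  ultimately have sumf: "sum f V = card V1 + 2 * card V2" by simp
  have "V0 \<subseteq> (\<Union>u\<in>V2. {v. adj G u v} \<inter> V0)"
  proof
    fix v assume v: "v \<in> V0"
    then obtain u where "adj G v u" "f u = 2" using f unfolding is_trdf_def V0_def V_def by blast
    moreover hence "u \<in> V" using adj_verts[of G v u] V_def by blast
    ultimately show "v \<in> (\<Union>u\<in>V2. {v. adj G u v} \<inter> V0)"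
      using v sy unfolding symg_def V2_def by blast
  qed
  hence "card V0 \<le> card (\<Union>u\<in>V2. {v. adj G u v} \<inter> V0)"
    by (rule card_mono[rotated]) (use fins in auto)
  also have "\<dots> \<le> (\<Sum>u\<in>V2. card ({v. adj G u v} \<inter> V0))"
    by (rule card_UN_le) (use fins in auto)
  also have "\<dots> \<le> (\<Sum>u\<in>V2. k - 1)"
  proof (rule sum_mono)
    fix u assume u: "u \<in> V2"
    then obtain w where w: "adj G u w" "f w > 0" using f unfolding is_trdf_def V2_def V_def by auto
    have "{v. adj G u v} \<inter> V0 \<subseteq> {v. adj G u v} - {w}" using w unfolding V0_def by auto
    hence "card ({v. adj G u v} \<inter> V0) \<le> card ({v. adj G u v} - {w})"
      by (rule card_mono[rotated]) (simp add: nbrs_finite fin)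
    also have "\<dots> = card {v. adj G u v} - 1" using w by (simp add: card_Diff_singleton nbrs_finite fin)
    also have "\<dots> \<le> k - 1" using dg unfolding degle_def by (simp add: diff_le_mono)
    finally show "card ({v. adj G u v} \<inter> V0) \<le> k - 1" .
  qed
  also have "\<dots> = (k - 1) * card V2" by simp
  finally have c0: "card V0 \<le> (k - 1) * card V2" .
  have a1: "2 * card V1 \<le> k * card V1" using k2 by simp
  have a2: "(k - 1) * card V2 + card V2 = k * card V2" using k2
    by (cases k) auto
  have "2 * card V \<le> 2 * ((k - 1) * card V2) + k * card V1 + 2 * card V2"
    using cardV c0 a1 by linarith
  also have "\<dots> = k * (card V1 + 2 * card V2)"
    using a2 by (simp add: algebra_simps)
  finally show ?thesis using sumf V_def by simp
qed

lemma gamma_eq: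
  assumes "finite (verts G)" "symg G" "degle G k" "2 \<le> k" "is_trdf G f"
    "sum f (verts G) = w" "k * w \<le> 2 * card (verts G)"
  shows "gamma_tR G = w"
  unfolding gamma_tR_def
proof (rule Least_equality)
  show "\<exists>f. is_trdf G f \<and> w = sum f (verts G)" using assms by metis
next
  fix y assume "\<exists>g. is_trdf G g \<and> y = sum g (verts G)"
  then obtain g where g: "is_trdf G g" "y = sum g (verts G)" by blast
  have "k * w \<le> k * y" using lower[OF assms(1-4) g(1)] g(2) assms(7) by (metis order_trans)
  thus "w \<le> y" using assms(4) by simp
qed

lemma prod_trdf:
  assumes "tdom G A" "tdom H B" "finite (verts G)" "finite (verts H)"
  shows "is_trdf (direct_prod G H) (\<lambda>v. if v \<in> A \<times> B then 2 else 0) \<and>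
         sum (\<lambda>v. if v \<in> A \<times> B then 2 else 0) (verts (direct_prod G H)) = 2 * card A * card B"
proof
  show "is_trdf (direct_prod G H) (\<lambda>v. if v \<in> A \<times> B then 2 else 0)"
    unfolding is_trdf_def
  proof (intro conjI ballI impI)
    fix v assume "v \<in> verts (direct_prod G H)"
    then obtain g h where v: "v = (g, h)" "g \<in> verts G" "h \<in> verts H" by (auto simp: verts_direct)
    obtain a b where "a \<in> A" "b \<in> B" "adj G g a" "adj H h b"
      using assms(1,2) v unfolding tdom_def by blast
    hence ab: "adj (direct_prod G H) v (a, b)" "(a, b) \<in> A \<times> B" using v by (auto simp: adj_direct)
    thus "\<exists>u. adj (direct_prod G H) v u \<and> (if u \<in> A \<times> B then 2 else 0) = (2::nat)" by (intro exI[of _ "(a,b)"]) auto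
    show "\<exists>u. adj (direct_prod G H) v u \<and> 0 < (if u \<in> A \<times> B then 2 else 0::nat)" using ab by (intro exI[of _ "(a,b)"]) auto
  qed auto
next
  have sub: "A \<times> B \<subseteq> verts G \<times> verts H" using assms(1,2) unfolding tdom_def by auto
  have fin: "finite (verts G \<times> verts H)" using assms(3,4) by simp
  have "sum (\<lambda>v. if v \<in> A \<times> B then 2 else 0) (verts G \<times> verts H) = sum (\<lambda>v. 2::nat) (A \<times> B)"
    using sum.mono_neutral_cong_right[OF fin sub, of "\<lambda>v. if v \<in> A \<times> B then 2 else (0::nat)" "\<lambda>v. 2"]
    by auto
  also have "\<dots> = 2 * card A * card B" by (simp only: sum_constant card_cartesian_product) simp
  finally show "sum (\<lambda>v. if v \<in> A \<times> B then 2 else 0) (verts (direct_prod G H)) = 2 * card A * card B"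
    by (simp add: verts_direct)
qed

lemma main_prod:
  assumes "finite (verts G)" "finite (verts H)" "symg G" "symg H" "degle G a" "degle H b"
    "2 \<le> a * b" "tdom G A" "tdom H B"
    "a * b * (2 * card A * card B) \<le> 2 * (card (verts G) * card (verts H))"
  shows "gamma_tR (direct_prod G H) = 2 * card A * card B"
proof -
  have P: "is_trdf (direct_prod G H) (\<lambda>v. if v \<in> A \<times> B then 2 else 0) \<and>
         sum (\<lambda>v. if v \<in> A \<times> B then 2 else 0) (verts (direct_prod G H)) = 2 * card A * card B"
    using prod_trdf[OF assms(8,9,1,2)] .
  show ?thesis
    apply (rule gamma_eq[of _ "a * b", OF _ _ _ _ conjunct1[OF P] conjunct2[OF P]])
    using assms by (auto simp: verts_direct card_cartesian_product symg_direct degle_direct)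
qed

lemma L1: "Suc a mod 3 \<noteq> (0::nat) \<Longrightarrow> Suc a mod 3 \<noteq> 1 \<Longrightarrow> a mod 3 = 1"
  by presburger
lemma L2: "(i::nat) mod 4 \<in> {0,1::nat} \<Longrightarrow> (i + 1) mod 4 \<in> {1, 2}"
  by auto presburger+
lemma L3: "(i::nat) mod 4 \<in> {0,1::nat} \<Longrightarrow> i < 4 * q \<Longrightarrow> i + 1 < 4 * q"
  by auto presburger+
lemma L4: "\<not> Suc a mod 4 \<in> {0,1::nat} \<Longrightarrow> a mod 4 \<in> {1, 2}"
  by auto presburger+
lemma L5: "x < 4 * Suc q \<and> x mod 4 \<in> {1, 2::nat} \<longleftrightarrow> x = 4 * q + 1 \<or> x = 4 * q + 2 \<or> (x < 4 * q \<and> x mod 4 \<in> {1, 2::nat})"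
  by auto presburger+
lemma L6: "x < 3 * Suc q \<and> x mod 3 = (1::nat) \<longleftrightarrow> x = 3 * q + 1 \<or> (x < 3 * q \<and> x mod 3 = 1)"
  by auto presburger+

lemma L7: "(i::nat) mod 3 = 0 \<Longrightarrow> (i + 1) mod 3 = 1"
  by presburger
lemma L8: "(i::nat) mod 3 = 0 \<Longrightarrow> i < 3*r \<Longrightarrow> i + 1 < 3*r"
  by arith

lemma adj_cycle: "adj (cycle_graph m) i j \<longleftrightarrow> i < m \<and> j < m \<and> (j = (i + 1) mod m \<or> i = (j + 1) mod m)"
  unfolding adj_def cycle_graph_def by auto

lemma verts_cycle: "verts (cycle_graph m) = {..<m}"
  unfolding verts_def cycle_graph_def by simp

lemma symg_cycle: "symg (cycle_graph m)"
  unfolding symg_def adj_cycle by auto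

lemma cycle_back: assumes "(j::nat) < m" "i = (j + 1) mod m" shows "j = (i + m - 1) mod m"
proof (cases "j + 1 < m")
  case True
  have "(j + 1) mod m = j + 1" using True mod_less by blast
  with assms(2) have i: "i = j + 1" by (rule trans)
  have e: "i + m - 1 = j + m" using i by arith
  have "(j + m) mod m = j mod m" by (rule mod_add_self2)
  also have "\<dots> = j" by (rule mod_less[OF assms(1)])
  finally have r: "(j + m) mod m = j" .
  show ?thesis by (subst e) (rule r[symmetric])
next
  case False
  hence m: "m = j + 1" using assms(1) by arith
  have "(j + 1) mod m = 0" using m by simp
  with assms(2) have "i = 0" by (rule trans)
  hence e: "i + m - 1 = j" using m by arith
  show ?thesis by (subst e) (rule mod_less[OF assms(1), symmetric])
qed

lemma cycle_nbrs: "{u. adj (cycle_graph m) i u} \<subseteq> {(i + 1) mod m, (i + m - 1) mod m}"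
proof
  fix u assume "u \<in> {u. adj (cycle_graph m) i u}"
  hence u: "u < m" "u = (i + 1) mod m \<or> i = (u + 1) mod m" unfolding adj_cycle by blast+
  show "u \<in> {(i + 1) mod m, (i + m - 1) mod m}"
  proof (cases "u = (i + 1) mod m")
    case True thus ?thesis by blast
  next
    case False
    hence "i = (u + 1) mod m" using u by blast
    hence "u = (i + m - 1) mod m" using cycle_back[OF u(1)] by blast
    thus ?thesis by blast
  qed
qed

lemma card2: "card {a, b} \<le> 2"
  by (simp add: card_insert_if)

lemma degle_cycle: "degle (cycle_graph m) 2"
  unfolding degle_def
proof
  fix i
  show "card {u. adj (cycle_graph m) i u} \<le> 2"
  proof -
    have "card {u. adj (cycle_graph m) i u} \<le> card {(i + 1) mod m, (i + m - 1) mod m}"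
      by (rule card_mono[OF _ cycle_nbrs]) simp
    also have "\<dots> \<le> 2" by (rule card2)
    finally show ?thesis .
  qed
qed

definition Acyc :: "nat \<Rightarrow> nat set" where
  "Acyc m = {i. i < m \<and> i mod 4 \<in> {1, 2}}"

lemma card_Acyc_aux: "card {i. i < 4 * q \<and> i mod 4 \<in> {1, 2::nat}} = 2 * q"
proof (induction q)
  case 0
  then show ?case by simp
next
  case (Suc q)
  have "{i. i < 4 * Suc q \<and> i mod 4 \<in> {1, 2::nat}} =
        insert (4 * q + 1) (insert (4 * q + 2) {i. i < 4 * q \<and> i mod 4 \<in> {1, 2::nat}})"
    using L5 by blast
  then show ?case using Suc by simp
qed

lemma card_Acyc: "4 dvd m \<Longrightarrow> card (Acyc m) = m div 2"
  unfolding Acyc_def using card_Acyc_aux by (auto elim!: dvdE)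

lemma tdom_cycle: assumes "4 dvd m" shows "tdom (cycle_graph m) (Acyc m)"
  unfolding tdom_def
proof (intro conjI ballI)
  show "Acyc m \<subseteq> verts (cycle_graph m)" unfolding Acyc_def verts_cycle by auto
next
  fix i assume "i \<in> verts (cycle_graph m)"
  hence i: "i < m" by (simp add: verts_cycle)
  obtain q where q: "m = 4 * q" using assms by (auto elim!: dvdE)
  show "\<exists>a\<in>Acyc m. adj (cycle_graph m) i a"
  proof (cases "i mod 4 \<in> {0, 1}")
    case True
    hence "i + 1 < m" "(i + 1) mod 4 \<in> {1, 2}" using i q L2 L3 by auto
    thus ?thesis unfolding Acyc_def adj_cycle using i by (intro bexI[of _ "i + 1"]) auto
  next
    case False
    then obtain a where a: "i = Suc a" by (cases i) auto
    hence "i \<ge> 1" "(i - 1) mod 4 \<in> {1, 2}" "i - 1 < m" using i L4 False by auto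
    thus ?thesis unfolding Acyc_def adj_cycle using i by (intro bexI[of _ "i - 1"]) auto
  qed
qed

lemma adj_cb: "adj (complete_bipartite t) x y \<longleftrightarrow> snd x < t \<and> snd y < t \<and> fst x \<noteq> fst y"
  unfolding adj_def complete_bipartite_def by auto

lemma verts_cb: "verts (complete_bipartite t) = UNIV \<times> {..<t}"
  unfolding verts_def complete_bipartite_def by auto

lemma card_verts_cb: "card (verts (complete_bipartite t)) = 2 * t"
  by (simp add: verts_cb card_cartesian_product)

lemma symg_cb: "symg (complete_bipartite t)"
  unfolding symg_def adj_cb by auto

lemma degle_cb: "degle (complete_bipartite t) t"
  unfolding degle_def
proof
  fix x :: "bool \<times> nat"
  have "{u. adj (complete_bipartite t) x u} \<subseteq> {\<not> fst x} \<times> {..<t}"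
    by (auto simp: adj_cb)
  from card_mono[OF _ this] show "card {u. adj (complete_bipartite t) x u} \<le> t"
    by (simp add: card_cartesian_product)
qed

lemma tdom_cb: "t > 0 \<Longrightarrow> tdom (complete_bipartite t) {(False, 0), (True, 0)}"
  unfolding tdom_def verts_cb adj_cb by auto

lemma adj_prism: "adj (prism k) (i, s) (j, s') \<longleftrightarrow>
   i < k \<and> j < k \<and> s \<in> {0, 1} \<and> s' \<in> {0, 1} \<and>
   ((i = j \<and> s \<noteq> s') \<or> (s = s' \<and> adj (cycle_graph k) i j))"
  unfolding prism_def cartesian_prod_def adj_def verts_def K2_def cycle_graph_def by auto

lemma verts_prism: "verts (prism k) = {..<k} \<times> {0, 1}"
  unfolding prism_def cartesian_prod_def verts_def K2_def cycle_graph_def by auto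

lemma card_verts_prism: "card (verts (prism k)) = 2 * k"
  by (simp add: verts_prism card_cartesian_product)

lemma symg_prism: "symg (prism k)"
  unfolding symg_def
proof (intro allI impI)
  fix u v assume "adj (prism k) u v"
  thus "adj (prism k) v u" using symg_cycle[of k] unfolding symg_def
    by (cases u; cases v) (auto simp: adj_prism)
qed

lemma degle_prism: "degle (prism k) 3"
  unfolding degle_def
proof
  fix x :: "nat \<times> nat"
  obtain i s where x: "x = (i, s)" by (cases x)
  have "{u. adj (prism k) x u} \<subseteq> insert (i, 1 - s) ({(i + 1) mod k, (i + k - 1) mod k} \<times> {s})"
  proof
    fix u assume "u \<in> {u. adj (prism k) x u}"
    then obtain j s' where u: "u = (j, s')" "adj (prism k) (i, s) (j, s')" using x by (cases u) auto
    show "u \<in> insert (i, 1 - s) ({(i + 1) mod k, (i + k - 1) mod k} \<times> {s})"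
      using u cycle_nbrs[of k i] unfolding adj_prism by auto
  qed
  from card_mono[OF _ this]
  have "card {u. adj (prism k) x u} \<le> card (insert (i, 1 - s) ({(i + 1) mod k, (i + k - 1) mod k} \<times> {s}))"
    by simp
  also have "\<dots> \<le> Suc (card ({(i + 1) mod k, (i + k - 1) mod k} \<times> {s}))"
    by (rule card_insert_le_m1) auto
  also have "\<dots> \<le> 3" using card2[of "((i + 1) mod k, s)" "((i + k - 1) mod k, s)"]
    by simp
  finally show "card {u. adj (prism k) x u} \<le> 3" .
qed

definition Bpr :: "nat \<Rightarrow> (nat \<times> nat) set" where
  "Bpr k = {i. i < k \<and> i mod 3 = 1} \<times> {0, 1}"

lemma card_Bpr_aux: "card {i. i < 3 * q \<and> i mod 3 = (1::nat)} = q"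
proof (induction q)
  case 0
  then show ?case by simp
next
  case (Suc q)
  have "{i. i < 3 * Suc q \<and> i mod 3 = (1::nat)} =
        insert (3 * q + 1) {i. i < 3 * q \<and> i mod 3 = (1::nat)}"
    using L6 by blast
  then show ?case using Suc by simp
qed

lemma card_Bpr: "card (Bpr (3 * r)) = 2 * r"
  proof -
  have "card {i. i < 3 * r \<and> i mod 3 = (1::nat)} = r" by (rule card_Bpr_aux)
  thus ?thesis unfolding Bpr_def by (simp add: card_cartesian_product)
qed

lemma tdom_prism: "tdom (prism (3 * r)) (Bpr (3 * r))"
  unfolding tdom_def
proof (intro conjI ballI)
  show "Bpr (3 * r) \<subseteq> verts (prism (3 * r))" unfolding Bpr_def verts_prism by auto
next
  fix x assume "x \<in> verts (prism (3 * r))"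
  then obtain i s where x: "x = (i, s)" "i < 3 * r" "s \<in> {0, 1}" by (auto simp: verts_prism)
  show "\<exists>a\<in>Bpr (3 * r). adj (prism (3 * r)) x a"
  proof (cases "i mod 3 = 0")
    case True
    have "i + 1 < 3 * r" "(i + 1) mod 3 = 1" using L8[OF True x(2)] L7[OF True] by auto
    thus ?thesis unfolding Bpr_def using x by (intro bexI[of _ "(i + 1, s)"]) (auto simp: adj_prism adj_cycle)
  next
    case F: False
    show ?thesis
    proof (cases "i mod 3 = 1")
      case True
      thus ?thesis unfolding Bpr_def using x by (intro bexI[of _ "(i, 1 - s)"]) (auto simp: adj_prism)
    next
      case False
      obtain a where a: "i = Suc a" using F by (cases i) auto
      have "a mod 3 = 1" by (rule L1) (use F False a in simp_all)
      hence "i \<ge> 1" "(i - 1) mod 3 = 1" using a by simp_all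
      thus ?thesis unfolding Bpr_def using x by (intro bexI[of _ "(i - 1, s)"]) (auto simp: adj_prism adj_cycle)
    qed
  qed
qed

theorem corollary4p6:
  fixes m n t r :: nat
  assumes "m > 0" "4 dvd m" "n > 0" "4 dvd n" "t \<ge> 2" "r \<ge> 1"
  shows "gamma_tR (direct_prod (cycle_graph m) (cycle_graph n)) = m * n div 2 \<and>
         gamma_tR (direct_prod (cycle_graph m) (complete_bipartite t)) = 2 * m \<and>
         gamma_tR (direct_prod (cycle_graph m) (prism (3 * r))) = 2 * m * r \<and>
         gamma_tR (direct_prod (complete_bipartite t) (prism (3 * r))) = 8 * r"
proof -
  obtain a where a: "m = 4 * a" using assms(2) by (auto elim!: dvdE)
  obtain b where b: "n = 4 * b" using assms(4) by (auto elim!: dvdE)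
  have fc: "\<And>k. finite (verts (cycle_graph k))" by (simp add: verts_cycle)
  have fcb: "finite (verts (complete_bipartite t))" by (simp add: verts_cb)
  have fp: "finite (verts (prism (3 * r)))" by (simp add: verts_prism)
  have cc: "\<And>k. card (verts (cycle_graph k)) = k" by (simp add: verts_cycle)
  have cA: "card (Acyc m) = 2 * a" using card_Acyc[OF assms(2)] a by simp
  have cB: "card (Acyc n) = 2 * b" using card_Acyc[OF assms(4)] b by simp
  have cK: "card {(False, 0::nat), (True, 0)} = 2" by simp
  have t0: "t > 0" using assms(5) by simp
  have 1: "gamma_tR (direct_prod (cycle_graph m) (cycle_graph n)) = 2 * card (Acyc m) * card (Acyc n)"
    by (rule main_prod[OF fc fc symg_cycle symg_cycle degle_cycle degle_cycle _
          tdom_cycle[OF assms(2)] tdom_cycle[OF assms(4)]]) (simp_all only: cc cA cB, simp_all add: a b)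
  have 2: "gamma_tR (direct_prod (cycle_graph m) (complete_bipartite t)) = 2 * card (Acyc m) * card {(False, 0::nat), (True, 0)}"
    apply (rule main_prod[OF fc fcb symg_cycle symg_cb degle_cycle degle_cb _
          tdom_cycle[OF assms(2)] tdom_cb[OF t0]])
    using assms(5) by (simp_all only: cc cA cK card_verts_cb, simp_all add: a)
  have 3: "gamma_tR (direct_prod (cycle_graph m) (prism (3 * r))) = 2 * card (Acyc m) * card (Bpr (3 * r))"
    by (rule main_prod[OF fc fp symg_cycle symg_prism degle_cycle degle_prism _
          tdom_cycle[OF assms(2)] tdom_prism]) (simp_all only: cc cA card_Bpr card_verts_prism, simp_all add: a)
  have 4: "gamma_tR (direct_prod (complete_bipartite t) (prism (3 * r))) = 2 * card {(False, 0::nat), (True, 0)} * card (Bpr (3 * r))"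
    apply (rule main_prod[OF fcb fp symg_cb symg_prism degle_cb degle_prism _
          tdom_cb[OF t0] tdom_prism])
    using assms(5) by (auto simp: cK card_Bpr card_verts_prism card_verts_cb)
  show ?thesis using 1 2 3 4 cA cB cK card_Bpr[of r] a b by simp
qed

end
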